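(* Let $\alpha>1/2$, $\lambda>0$, $\tau\in(0,1)$, $X>0$ a.s. Let $Z$ be a standard normal random variable and $\gamma(\alpha-\frac12,\lambda)$ a gamma random variable with shape $\alpha-\frac12$ and rate $\lambda$, such that $Z,X,\gamma(\alpha-\frac12,\lambda)$ are independent. Then $$X_\tau\overset{\mathcal L}{=}(1-\tau)\gamma(\alpha-\tfrac12,\lambda)+\Big(\sqrt\tau\sqrt X+\sqrt{\tfrac{1-\tau}{2\lambda}}Z\Big)^2.$$
   Context: For $\tau\in(0,1)$, the gamma smart path $X_\tau$ is defined as follows: conditionally on $X=x$, let $K$ be Poisson with mean $\lambda\tau x/(1-\tau)$; conditionally on $X=x,K=k$, let $Y=0$ if $k=0$ and let $Y$ be gamma distributed with shape $k$ and rate $\lambda\tau/(1-\tau)$ if $k\ge1$; let $\gamma(\alpha,\lambda)$ be a random variable with density $\frac{\lambda^\alpha}{\Gamma(\alpha)}u^{\alpha-1}e^{-\lambda u}$ independent of $(X,K,Y)$; set $X_\tau=(1-\tau)\gamma(\alpha,\lambda)+\tau Y$. *)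

theory Defs
  imports "HOL-Probability.Probability"
begin

definition gamma_density :: "real \<Rightarrow> real \<Rightarrow> real \<Rightarrow> real" where
  "gamma_density a b u = (if 0 < u then b powr a / Gamma a * u powr (a - 1) * exp (- b * u) else 0)"

definition gamma_measure :: "real \<Rightarrow> real \<Rightarrow> real measure" where
  "gamma_measure a b = density lborel (\<lambda>u. ennreal (gamma_density a b u))"

definition poisson_law :: "real \<Rightarrow> nat measure" where
  "poisson_law m = measure_pmf (if 0 < m then poisson_pmf m else return_pmf 0)"

text \<open>Law of the gamma smart path X_tau, given the law mu of X (a probability measure on borel).\<close>
definition smart_path_law :: "real \<Rightarrow> real \<Rightarrow> real \<Rightarrow> real measure \<Rightarrow> real measure" where
  "smart_path_law \<alpha> lam \<tau> \<mu> =
     \<mu> \<bind> (\<lambda>x.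
     poisson_law (lam * \<tau> * x / (1 - \<tau>)) \<bind> (\<lambda>k.
     (if k = 0 then return borel 0 else gamma_measure (real k) (lam * \<tau> / (1 - \<tau>))) \<bind> (\<lambda>y.
     gamma_measure \<alpha> lam \<bind> (\<lambda>g.
     return borel ((1 - \<tau>) * g + \<tau> * y)))))"

end

theory Submission
  imports Defs
begin


lemma gamma_density_nonneg: "0 < a \<Longrightarrow> 0 \<le> gamma_density a b u"
  unfolding gamma_density_def by auto

lemma gamma_density_meas[measurable]: "gamma_density a b \<in> borel_measurable borel"
  unfolding gamma_density_def[abs_def] by measurable

lemma gamma_density_scale1:
  assumes "0 < b" "0 < x"
  shows "(1/b) * gamma_density a b (x/b) = x powr (a-1) * exp (-x) / Gamma a"
proof -
  have e: "b powr a = b * b powr (a - 1)" using assms by (simp add: powr_diff)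
  show ?thesis using assms
    by (simp add: gamma_density_def powr_divide field_simps e)
qed

lemma gamma_nn_integral:
  assumes a: "0 < a" and b: "0 < b"
  shows "(\<integral>\<^sup>+u. ennreal (gamma_density a b u) \<partial>lborel) = 1"
proof -
  have "(\<integral>\<^sup>+u. ennreal (gamma_density a b u) \<partial>lborel)
       = ennreal \<bar>1/b\<bar> * (\<integral>\<^sup>+x. ennreal (gamma_density a b (0 + (1/b) * x)) \<partial>lborel)"
    using b by (intro nn_integral_real_affine) auto
  also have "\<dots> = (\<integral>\<^sup>+x. ennreal (1/b) * ennreal (gamma_density a b (x/b)) \<partial>lborel)"
    using b by (subst nn_integral_cmult) auto
  also have "\<dots> = (\<integral>\<^sup>+x. ennreal (indicator {0..} x * x powr (a-1) / exp x) * ennreal (1/Gamma a) \<partial>lborel)"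
  proof (intro nn_integral_cong)
    fix x :: real
    show "ennreal (1/b) * ennreal (gamma_density a b (x/b)) =
          ennreal (indicator {0..} x * x powr (a-1) / exp x) * ennreal (1/Gamma a)"
    proof (cases "x > 0")
      case True
      have "ennreal (1/b) * ennreal (gamma_density a b (x/b)) = ennreal ((1/b) * gamma_density a b (x/b))"
        using b gamma_density_nonneg[OF a] by (subst ennreal_mult[symmetric]) auto
      also have "\<dots> = ennreal (x powr (a-1) * exp (-x) / Gamma a)"
        using gamma_density_scale1[OF b True] by simp
      also have "\<dots> = ennreal (indicator {0..} x * x powr (a-1) / exp x) * ennreal (1/Gamma a)"
        using True a Gamma_real_pos[OF a] by (simp add: ennreal_mult'[symmetric] exp_minus field_simps)
      finally show ?thesis .
    next
      case False
      then show ?thesis using b by (cases "x = 0") (auto simp: gamma_density_def indicator_def zero_less_divide_iff)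
    qed
  qed
  also have "\<dots> = ennreal (Gamma a) * ennreal (1/Gamma a)"
    by (subst nn_integral_multc) (auto simp: Gamma_conv_nn_integral_real[OF a])
  also have "\<dots> = 1" proof - have g: "Gamma a \<noteq> 0" using Gamma_real_pos[OF a] by linarith show ?thesis using a g by (subst ennreal_mult[symmetric]) auto qed
  finally show ?thesis .
qed

lemma prob_space_gamma: "0 < a \<Longrightarrow> 0 < b \<Longrightarrow> prob_space (gamma_measure a b)"
  unfolding gamma_measure_def
  by (intro prob_spaceI) (simp add: emeasure_density gamma_nn_integral)

lemma sets_gamma[simp, measurable_cong]: "sets (gamma_measure a b) = sets borel"
  by (simp add: gamma_measure_def)

lemma space_gamma[simp]: "space (gamma_measure a b) = UNIV"
  by (simp add: gamma_measure_def)

lemma gamma_density_scale2: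
  assumes "0 < b" "0 < c"
  shows "c * gamma_density a (b/c) (c*u) = gamma_density a b u"
proof (cases "u > 0")
  case True
  have e: "c powr a = c * c powr (a - 1)" using assms by (simp add: powr_diff)
  have "c * gamma_density a (b/c) (c*u) = (c * c powr (a - 1) / c powr a) * gamma_density a b u"
    using assms True
    by (simp add: gamma_density_def powr_divide powr_mult zero_less_mult_iff field_simps)
  also have "c * c powr (a - 1) / c powr a = 1" using assms by (simp add: e[symmetric])
  finally show ?thesis by simp
qed (use assms in \<open>auto simp: gamma_density_def zero_less_mult_iff\<close>)

lemma gamma_scale:
  assumes "0 < b" "0 < c"
  shows "distr (gamma_measure a b) borel (\<lambda>x. c * x) = gamma_measure a (b/c)"
proof (rule measure_eqI)
  fix A :: "real set" assume "A \<in> sets (distr (gamma_measure a b) borel (\<lambda>x. c * x))"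
  then have A[measurable]: "A \<in> sets borel" by simp
  have [measurable]: "(*) c -` A \<in> sets borel" by (rule measurable_sets_borel[OF _ A]) simp
  have "emeasure (distr (gamma_measure a b) borel (\<lambda>x. c * x)) A
      = (\<integral>\<^sup>+u. ennreal (gamma_density a b u) * indicator A (c * u) \<partial>lborel)"
    unfolding gamma_measure_def
    by (subst emeasure_distr, simp, simp, subst emeasure_density)
       (auto intro!: nn_integral_cong split: split_indicator)
  also have "\<dots> = (\<integral>\<^sup>+u. ennreal c * (ennreal (gamma_density a (b/c) (0 + c*u)) * indicator A (0 + c * u)) \<partial>lborel)"
    using assms by (intro nn_integral_cong) (simp add: ennreal_mult'[symmetric] gamma_density_scale2 mult.assoc[symmetric])
  also have "\<dots> = ennreal \<bar>c\<bar> * (\<integral>\<^sup>+u. ennreal (gamma_density a (b/c) (0 + c*u)) * indicator A (0 + c * u) \<partial>lborel)"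
    using assms by (subst nn_integral_cmult) auto
  also have "\<dots> = (\<integral>\<^sup>+v. ennreal (gamma_density a (b/c) v) * indicator A v \<partial>lborel)"
    using assms by (intro nn_integral_real_affine[symmetric]) auto
  also have "\<dots> = emeasure (gamma_measure a (b/c)) A"
    unfolding gamma_measure_def by (simp add: emeasure_density)
  finally show "emeasure (distr (gamma_measure a b) borel (\<lambda>x. c * x)) A = emeasure (gamma_measure a (b/c)) A" .
qed simp



lemma gamma_conv_alg:
  assumes u: "0 < u" and t: "0 < t" "t < 1"
  shows "u * (gamma_density a b (u - u*t) * gamma_density c b (u*t)) =
         (b powr (a+c) / (Gamma a * Gamma c) * u powr (a+c-1) * exp (-b*u)) * (t powr (c-1) * (1-t) powr (a-1))"
proof -
  have p1: "u - u*t > 0" using u t by (simp add: algebra_simps)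
  have p2: "u*t > 0" using u t by simp
  have e1: "(u - u*t) powr (a-1) = u powr (a-1) * (1-t) powr (a-1)"
    using u t by (subst powr_mult[symmetric]) (auto simp: algebra_simps)
  have e2: "(u*t) powr (c-1) = u powr (c-1) * t powr (c-1)"
    using u t by (subst powr_mult) auto
  have e3: "u powr (a+c-1) = u * (u powr (a-1) * u powr (c-1))"
  proof -
    have "u powr (a+c-1) = u powr ((a-1) + (c-1) + 1)" by simp
    also have "\<dots> = u powr (a-1) * u powr (c-1) * u" using u by (simp only: powr_add powr_one)
    finally show ?thesis by simp
  qed
  have e4: "exp (- b * (u - u*t)) * exp (- b * (u*t)) = exp (-b*u)"
    by (simp add: exp_add[symmetric] algebra_simps)
  have e5: "b powr (a+c) = b powr a * b powr c" by (simp add: powr_add)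
  have "u * (gamma_density a b (u - u*t) * gamma_density c b (u*t)) =
        u * (b powr a / Gamma a * (u - u*t) powr (a-1) * exp (- b * (u - u*t)) *
             (b powr c / Gamma c * (u*t) powr (c-1) * exp (- b * (u*t))))"
    using p1 p2 by (simp add: gamma_density_def)
  also have "\<dots> = (b powr a * b powr c / (Gamma a * Gamma c)) * (u * (u powr (a-1) * u powr (c-1)))
       * (exp (- b * (u - u*t)) * exp (- b * (u*t))) * (t powr (c-1) * (1-t) powr (a-1))"
    unfolding e1 e2 by (simp add: field_simps)
  also have "\<dots> = (b powr (a+c) / (Gamma a * Gamma c) * u powr (a+c-1) * exp (-b*u)) * (t powr (c-1) * (1-t) powr (a-1))"
    unfolding e3 e4 e5 by (simp add: field_simps)
  finally show ?thesis .
qed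

lemma gamma_conv_pointwise:
  assumes a: "0 < a" and c: "0 < c" and b: "0 < b"
  shows "(\<integral>\<^sup>+y. ennreal (gamma_density a b (u - y)) * ennreal (gamma_density c b y) \<partial>lborel)
         = ennreal (gamma_density (a+c) b u)"
proof (cases "u > 0")
  case False
  have "(\<lambda>y. ennreal (gamma_density a b (u - y)) * ennreal (gamma_density c b y)) = (\<lambda>y. 0)"
    using False by (auto simp: gamma_density_def fun_eq_iff)
  then show ?thesis using False by (simp add: gamma_density_def)
next
  case u: True
  define C where "C = b powr (a+c) / (Gamma a * Gamma c) * u powr (a+c-1) * exp (-b*u)"
  have C0: "0 \<le> C" using a c unfolding C_def by simp
  have "(\<integral>\<^sup>+y. ennreal (gamma_density a b (u - y)) * ennreal (gamma_density c b y) \<partial>lborel)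
     = ennreal \<bar>u\<bar> * (\<integral>\<^sup>+t. ennreal (gamma_density a b (u - (0 + u*t))) * ennreal (gamma_density c b (0 + u*t)) \<partial>lborel)"
    using u by (intro nn_integral_real_affine) auto
  also have "\<dots> = (\<integral>\<^sup>+t. ennreal u * (ennreal (gamma_density a b (u - u*t)) * ennreal (gamma_density c b (u*t))) \<partial>lborel)"
    using u by (subst nn_integral_cmult) auto
  also have "\<dots> = (\<integral>\<^sup>+t. ennreal C * ennreal (indicator {0..1} t * (t powr (c-1) * (1-t) powr (a-1))) \<partial>lborel)"
  proof (intro nn_integral_cong)
    fix t :: real
    consider "t \<le> 0" | "0 < t \<and> t < 1" | "1 \<le> t" by linarith
    then show "ennreal u * (ennreal (gamma_density a b (u - u*t)) * ennreal (gamma_density c b (u*t))) =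
               ennreal C * ennreal (indicator {0..1} t * (t powr (c-1) * (1-t) powr (a-1)))"
    proof cases
      case 1
      then have "u*t \<le> 0" using u mult_nonneg_nonpos[of u t] by linarith
      then have "gamma_density c b (u*t) = 0" by (simp add: gamma_density_def)
      moreover have "indicator {0..1} t * (t powr (c-1) * (1-t) powr (a-1)) = (0::real)"
        using 1 by (cases "t = 0") (auto simp: indicator_def)
      ultimately show ?thesis by simp
    next
      case 2
      have "ennreal u * (ennreal (gamma_density a b (u - u*t)) * ennreal (gamma_density c b (u*t)))
          = ennreal (u * (gamma_density a b (u - u*t) * gamma_density c b (u*t)))"
        using u gamma_density_nonneg[OF a] gamma_density_nonneg[OF c]
        by (simp add: ennreal_mult[symmetric])
      also have "\<dots> = ennreal (C * (indicator {0..1} t * (t powr (c-1) * (1-t) powr (a-1))))"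
        using gamma_conv_alg[OF u, of t a b c] 2 unfolding C_def by (simp add: indicator_def)
      also have "\<dots> = ennreal C * ennreal (indicator {0..1} t * (t powr (c-1) * (1-t) powr (a-1)))"
        using C0 2 by (simp add: ennreal_mult)
      finally show ?thesis .
    next
      case 3
      then have "u - u*t \<le> 0" using u
        using mult_left_mono[of 1 t u] by simp
      then have "gamma_density a b (u - u*t) = 0" by (auto simp: gamma_density_def)
      moreover have "indicator {0..1} t * (t powr (c-1) * (1-t) powr (a-1)) = (0::real)"
        using 3 by (cases "t = 1") (auto simp: indicator_def)
      ultimately show ?thesis by simp
    qed
  qed
  also have "\<dots> = ennreal C * (\<integral>\<^sup>+t. ennreal (indicator {0..1} t * (t powr (c-1) * (1-t) powr (a-1))) \<partial>lborel)"
    by (subst nn_integral_cmult) auto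
  also have "(\<integral>\<^sup>+t. ennreal (indicator {0..1} t * (t powr (c-1) * (1-t) powr (a-1))) \<partial>lborel) = ennreal (Beta c a)"
    using nn_integral_has_integral_lebesgue[OF _ has_integral_Beta_real[OF c a]] by simp
  also have "ennreal C * ennreal (Beta c a) = ennreal (C * Beta c a)"
  proof -
    have "0 \<le> Beta c a" using a c by (simp add: Beta_def)
    then show ?thesis using C0 by (simp add: ennreal_mult)
  qed
  also have "C * Beta c a = gamma_density (a+c) b u"
  proof -
    have g: "Gamma a \<noteq> 0" "Gamma c \<noteq> 0" "Gamma (c+a) \<noteq> 0"
      using Gamma_real_pos[OF a] Gamma_real_pos[OF c] Gamma_real_pos[of "c+a"] a c by linarith+
    show ?thesis using u g unfolding C_def Beta_def gamma_density_def by (simp add: field_simps add.commute)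
  qed
  finally show ?thesis .
qed

lemma gamma_conv:
  assumes a: "0 < a" and c: "0 < c" and b: "0 < b"
  shows "gamma_measure a b \<star> gamma_measure c b = gamma_measure (a+c) b"
proof -
  have "gamma_measure a b \<star> gamma_measure c b =
        density lborel (\<lambda>x. \<integral>\<^sup>+y. ennreal (gamma_density a b (x - y)) * ennreal (gamma_density c b y) \<partial>lborel)"
    unfolding gamma_measure_def
    using prob_space_gamma[OF a b] prob_space_gamma[OF c b]
    by (intro convolution_density) (auto simp: gamma_measure_def prob_space.finite_measure)
  also have "\<dots> = gamma_measure (a+c) b"
    unfolding gamma_measure_def by (simp add: gamma_conv_pointwise[OF a c b])
  finally show ?thesis .
qed



lemma lim_Ici:
  fixes F :: "real \<Rightarrow> ennreal" and h :: "nat \<Rightarrow> real"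
  assumes [measurable]: "F \<in> borel_measurable borel" and h: "incseq h" "filterlim h at_top sequentially"
  shows "(\<lambda>n. \<integral>\<^sup>+x. F x * indicator {0..h n} x \<partial>lborel) \<longlonglongrightarrow> (\<integral>\<^sup>+x. F x * indicator {0..} x \<partial>lborel)"
proof (intro nn_integral_LIMSEQ)
  show "incseq (\<lambda>n x. F x * indicator {0..h n} x)"
    using h(1) by (auto simp: incseq_def le_fun_def intro!: mult_left_mono split: split_indicator)
       (meson order_trans)
  fix x :: real
  show "(\<lambda>n. F x * indicator {0..h n} x) \<longlonglongrightarrow> F x * indicator {0..} x"
  proof (cases "0 \<le> x")
    case True
    have "eventually (\<lambda>n. x \<le> h n) sequentially"
      using h(2) by (simp add: filterlim_at_top)
    then have "eventually (\<lambda>n. F x * indicator {0..h n} x = F x * indicator {0..} x) sequentially"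
      by eventually_elim (use True in \<open>auto simp: indicator_def\<close>)
    then show ?thesis by (rule tendsto_eventually)
  qed (auto simp: indicator_def)
qed auto

lemma sq_subst:
  fixes G :: "real \<Rightarrow> ennreal"
  assumes [measurable]: "G \<in> borel_measurable borel"
  shows "(\<integral>\<^sup>+w. G w * indicator {0..} w \<partial>lborel) = (\<integral>\<^sup>+v. G (v^2) * ennreal (2 * v) * indicator {0..} v \<partial>lborel)"
proof (rule LIMSEQ_unique)
  let ?h = "\<lambda>n::nat. real (Suc n)"
  have hinc: "incseq ?h" by (auto simp: incseq_def)
  have hlim: "filterlim ?h at_top sequentially"
    by (rule filterlim_compose[OF filterlim_real_sequentially]) (rule filterlim_Suc)
  have h2inc: "incseq (\<lambda>n. (?h n)^2)" by (auto simp: incseq_def intro!: power_mono)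
  have h2lim: "filterlim (\<lambda>n. (?h n)^2) at_top sequentially"
    by (rule filterlim_compose[OF filterlim_pow_at_top[of 2 "\<lambda>x. x" at_top] hlim]) (auto simp: filterlim_ident)
  show "(\<lambda>n. \<integral>\<^sup>+w. G w * indicator {0..(?h n)^2} w \<partial>lborel) \<longlonglongrightarrow> (\<integral>\<^sup>+w. G w * indicator {0..} w \<partial>lborel)"
    by (rule lim_Ici[OF _ h2inc h2lim]) simp
  have eq: "(\<integral>\<^sup>+w. G w * indicator {0..(?h n)^2} w \<partial>lborel) =
            (\<integral>\<^sup>+v. G (v^2) * ennreal (2 * v) * indicator {0..?h n} v \<partial>lborel)" for n
  proof -
    have "(\<integral>\<^sup>+w. G w * indicator {(\<lambda>x. x^2) 0..(\<lambda>x. x^2) (?h n)} w \<partial>lborel) =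
          (\<integral>\<^sup>+v. G ((\<lambda>x. x^2) v) * ennreal (2 * v) * indicator {0..?h n} v \<partial>lborel)"
      by (rule nn_integral_substitution_aux[where g="\<lambda>x. x^2" and g'="\<lambda>x. 2 * x"])
         (auto intro!: derivative_eq_intros continuous_intros)
    then show ?thesis by simp
  qed
  show "(\<lambda>n. \<integral>\<^sup>+w. G w * indicator {0..(?h n)^2} w \<partial>lborel) \<longlonglongrightarrow> (\<integral>\<^sup>+v. G (v^2) * ennreal (2 * v) * indicator {0..} v \<partial>lborel)"
    unfolding eq by (rule lim_Ici[OF _ hinc hlim]) simp
qed

definition sqdens :: "(real \<Rightarrow> real) \<Rightarrow> real \<Rightarrow> real" where
  "sqdens f w = (if w > 0 then (f (sqrt w) + f (- sqrt w)) / (2 * sqrt w) else 0)"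

lemma sqdens_meas[measurable]:
  assumes [measurable]: "f \<in> borel_measurable borel" shows "sqdens f \<in> borel_measurable borel"
  unfolding sqdens_def[abs_def] by measurable

lemma sqdens_nonneg: "(\<And>x. 0 \<le> f x) \<Longrightarrow> 0 \<le> sqdens f w"
  unfolding sqdens_def by auto

lemma distr_square_density:
  fixes f :: "real \<Rightarrow> real"
  assumes f[measurable]: "f \<in> borel_measurable borel" and nn: "\<And>x. 0 \<le> f x"
  shows "distr (density lborel (\<lambda>v. ennreal (f v))) borel (\<lambda>v. v^2) = density lborel (\<lambda>w. ennreal (sqdens f w))"
proof (rule measure_eqI)
  fix A :: "real set" assume "A \<in> sets (distr (density lborel (\<lambda>v. ennreal (f v))) borel (\<lambda>v. v^2))"
  then have A[measurable]: "A \<in> sets borel" by simp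
  have [measurable]: "(\<lambda>v. v^2) -` A \<in> sets borel" by (rule measurable_sets_borel[OF _ A]) simp
  have "emeasure (distr (density lborel (\<lambda>v. ennreal (f v))) borel (\<lambda>v. v^2)) A
      = (\<integral>\<^sup>+v. ennreal (f v) * indicator A (v^2) \<partial>lborel)"
    by (subst emeasure_distr, simp, simp, subst emeasure_density)
       (auto intro!: nn_integral_cong split: split_indicator)
  also have "\<dots> = (\<integral>\<^sup>+v. ennreal (f v) * indicator A (v^2) * indicator {0..} v
                    + ennreal (f v) * indicator A (v^2) * indicator {..<0} v \<partial>lborel)"
    by (intro nn_integral_cong) (auto split: split_indicator)
  also have "\<dots> = (\<integral>\<^sup>+v. ennreal (f v) * indicator A (v^2) * indicator {0..} v \<partial>lborel)
                 + (\<integral>\<^sup>+v. ennreal (f v) * indicator A (v^2) * indicator {..<0} v \<partial>lborel)"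
    by (rule nn_integral_add) auto
  also have "(\<integral>\<^sup>+v. ennreal (f v) * indicator A (v^2) * indicator {..<0} v \<partial>lborel)
        = ennreal \<bar>-1\<bar> * (\<integral>\<^sup>+v. ennreal (f (0 + -1 * v)) * indicator A ((0 + -1 * v)^2) * indicator {..<0} (0 + -1 * v) \<partial>lborel)"
    by (intro nn_integral_real_affine) auto
  also have "\<dots> = (\<integral>\<^sup>+v. ennreal (f (- v)) * indicator A (v^2) * indicator {0<..} v \<partial>lborel)"
    by (auto intro!: nn_integral_cong split: split_indicator)
  also have "\<dots> = (\<integral>\<^sup>+v. ennreal (f (- v)) * indicator A (v^2) * indicator {0..} v \<partial>lborel)"
    by (intro nn_integral_cong_AE eventually_mono[OF AE_lborel_singleton[of 0]])
       (auto split: split_indicator)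
  also have "(\<integral>\<^sup>+v. ennreal (f v) * indicator A (v^2) * indicator {0..} v \<partial>lborel)
           + (\<integral>\<^sup>+v. ennreal (f (- v)) * indicator A (v^2) * indicator {0..} v \<partial>lborel)
           = (\<integral>\<^sup>+v. ennreal (f v) * indicator A (v^2) * indicator {0..} v
                    + ennreal (f (- v)) * indicator A (v^2) * indicator {0..} v \<partial>lborel)"
    by (rule nn_integral_add[symmetric]) auto
  also have "\<dots> = (\<integral>\<^sup>+v. (ennreal (sqdens f (v^2)) * indicator A (v^2)) * ennreal (2 * v) * indicator {0..} v \<partial>lborel)"
  proof (intro nn_integral_cong_AE eventually_mono[OF AE_lborel_singleton[of 0]])
    fix v :: real assume "v \<noteq> 0"
    show "ennreal (f v) * indicator A (v^2) * indicator {0..} v + ennreal (f (- v)) * indicator A (v^2) * indicator {0..} v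
        = (ennreal (sqdens f (v^2)) * indicator A (v^2)) * ennreal (2 * v) * indicator {0..} v"
    proof (cases "v > 0")
      case True
      have "sqdens f (v^2) * (2 * v) = f v + f (- v)"
        using True by (simp add: sqdens_def)
      then have "ennreal (sqdens f (v^2)) * ennreal (2 * v) = ennreal (f v) + ennreal (f (-v))"
        using True nn sqdens_nonneg[of f, OF nn] by (simp add: ennreal_mult[symmetric] ennreal_plus[symmetric] del: ennreal_plus)
      then show ?thesis using True
        by (auto simp: indicator_def algebra_simps)
    qed (use \<open>v \<noteq> 0\<close> in auto)
  qed
  also have "\<dots> = (\<integral>\<^sup>+w. (ennreal (sqdens f w) * indicator A w) * indicator {0..} w \<partial>lborel)"
    by (rule sq_subst[symmetric]) simp
  also have "\<dots> = (\<integral>\<^sup>+w. ennreal (sqdens f w) * indicator A w \<partial>lborel)"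
    by (intro nn_integral_cong) (auto simp: sqdens_def split: split_indicator)
  also have "\<dots> = emeasure (density lborel (\<lambda>w. ennreal (sqdens f w))) A"
    by (simp add: emeasure_density)
  finally show "emeasure (distr (density lborel (\<lambda>v. ennreal (f v))) borel (\<lambda>v. v^2)) A =
                emeasure (density lborel (\<lambda>w. ennreal (sqdens f w))) A" .
qed simp



definition pois :: "real \<Rightarrow> nat \<Rightarrow> real" where
  "pois m k = exp (- m) * m ^ k / fact k"

lemma pois_nonneg: "0 \<le> m \<Longrightarrow> 0 \<le> pois m k"
  unfolding pois_def by simp

lemma Gamma_half_nat: "Gamma (real k + 1/2) = sqrt pi * fact (2 * k) / (4 ^ k * fact k)"
proof (induction k)
  case 0
  then show ?case by (simp add: Gamma_one_half_real)
next
  case (Suc k)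
  have nz: "real k + 1/2 \<notin> \<int>\<^sub>\<le>\<^sub>0" using nonpos_Ints_nonpos by force
  have "Gamma (real (Suc k) + 1/2) = Gamma ((real k + 1/2) + 1)" by (simp add: algebra_simps)
  also have "\<dots> = (real k + 1/2) * Gamma (real k + 1/2)" by (rule Gamma_plus1[OF nz])
  also have "\<dots> = (real k + 1/2) * (sqrt pi * fact (2 * k) / (4 ^ k * fact k))" by (simp add: Suc.IH)
  also have "\<dots> = sqrt pi * fact (2 * Suc k) / (4 ^ Suc k * fact (Suc k))"
  proof -
    define D :: real where "D = 4 ^ k * fact k"
    define F :: real where "F = fact (2 * k)"
    have D: "D \<noteq> 0" unfolding D_def by simp
    have "2 * Suc k = Suc (Suc (2 * k))" by simp
    then have f: "(fact (2 * Suc k) :: real) = (2 * real k + 2) * (2 * real k + 1) * F"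
      unfolding F_def by (simp add: algebra_simps)
    have g: "(4 ^ Suc k * fact (Suc k) :: real) = 4 * (real k + 1) * D"
      unfolding D_def by (simp add: algebra_simps)
    define K where "K = real k + 1"
    have k1: "K \<noteq> 0" unfolding K_def by simp
    have kk: "2 * real k + 2 = 2 * K" "2 * real k + 1 = 2 * K - 1" "real k + 1 = K" "real k + 1/2 = K - 1/2"
      unfolding K_def by simp_all
    show ?thesis unfolding f g D_def[symmetric] F_def[symmetric] kk using D k1 by (simp add: field_simps)
  qed
  finally show ?case .
qed

lemma cosh_even_sums: "(\<lambda>k. y ^ (2 * k) / fact (2 * k)) sums cosh (y::real)"
proof -
  have "(\<lambda>n. if even n then y ^ n /\<^sub>R fact n else 0) sums cosh y" by (rule cosh_converges)
  then have "(\<lambda>k. (\<lambda>n. if even n then y ^ n /\<^sub>R fact n else 0) (2 * k)) sums cosh y"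
    by (subst sums_mono_reindex) (auto simp: strict_mono_def image_def elim!: oddE evenE)
  then show ?thesis by (simp add: divide_inverse mult.commute)
qed

lemma term_identity:
  assumes w: "0 < w" and s: "0 < \<sigma>"
  shows "exp (- (w + c^2) / (2 * \<sigma>^2)) / (sqrt (2 * pi * \<sigma>^2) * sqrt w) * ((c * sqrt w / \<sigma>^2) ^ (2 * k) / fact (2 * k))
       = pois (c^2 / (2 * \<sigma>^2)) k * gamma_density (1/2 + real k) (1 / (2 * \<sigma>^2)) w"
proof -
  define \<beta> where "\<beta> = 1 / (2 * \<sigma>^2)"
  have b: "0 < \<beta>" using s by (simp add: \<beta>_def)
  have g1: "\<beta> powr (1/2 + real k) = sqrt \<beta> * \<beta> ^ k"
    using b by (simp add: powr_add powr_half_sqrt powr_realpow)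
  have g2: "w powr (1/2 + real k - 1) = w ^ k / sqrt w"
  proof -
    have "w powr (1/2 + real k - 1) = w powr (real k) / w powr (1/2)"
      by (subst powr_diff[symmetric]) (simp add: algebra_simps)
    then show ?thesis using w by (simp add: powr_half_sqrt powr_realpow)
  qed
  have g3: "Gamma (1/2 + real k) = sqrt pi * fact (2 * k) / (4 ^ k * fact k)"
    using Gamma_half_nat[of k] by (simp add: add.commute)
  have gd: "gamma_density (1/2 + real k) \<beta> w = sqrt \<beta> * \<beta> ^ k / (sqrt pi * fact (2 * k) / (4 ^ k * fact k)) * (w ^ k / sqrt w) * exp (- \<beta> * w)"
    using w unfolding gamma_density_def g1 g2 g3 by simp
  have y0: "(c * sqrt w / \<sigma>^2)^2 = c^2 * w / ((\<sigma>^2)^2)"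
    using w by (simp add: power_divide power_mult_distrib)
  have y: "(c * sqrt w / \<sigma>^2) ^ (2 * k) = (c^2) ^ k * w ^ k / (((\<sigma>^2)^2) ^ k)"
    by (simp only: power_mult y0) (simp add: power_divide power_mult_distrib)
  have e: "exp (- (w + c^2) / (2 * \<sigma>^2)) = exp (- (c^2 / (2 * \<sigma>^2))) * exp (- \<beta> * w)"
    unfolding \<beta>_def using s by (simp add: exp_add[symmetric] field_simps)
  have sq1: "sqrt (2 * pi * \<sigma>^2) = sqrt 2 * sqrt pi * \<sigma>"
    using s by (simp add: real_sqrt_mult)
  have sq2: "sqrt \<beta> = 1 / (sqrt 2 * \<sigma>)"
    using s unfolding \<beta>_def by (simp add: real_sqrt_divide real_sqrt_mult)
  have p4: "(4::real) ^ k = 2 ^ k * 2 ^ k" by (simp add: power_mult_distrib[symmetric])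
  have pb: "\<beta> ^ k = 1 / (2 ^ k * (\<sigma>^2) ^ k)" unfolding \<beta>_def by (simp add: power_divide power_mult_distrib)
  have pm: "(c^2 / (2 * \<sigma>^2)) ^ k = (c^2) ^ k / (2 ^ k * (\<sigma>^2) ^ k)" by (simp add: power_divide power_mult_distrib)
  have nz: "sqrt w \<noteq> 0" "\<sigma> \<noteq> 0" "(fact (2 * k) :: real) \<noteq> 0" "(fact k :: real) \<noteq> 0" "sqrt pi \<noteq> 0" "sqrt 2 \<noteq> 0"
    using w s by auto
  have p: "(\<sigma>^4)^k = (\<sigma>^2)^k * (\<sigma>^2)^k"
  proof -
    have "(\<sigma>^2)^k * (\<sigma>^2)^k = \<sigma>^(2*k + 2*k)" by (simp only: power_add power_mult)
    also have "2*k + 2*k = 4*k" by simp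
    also have "\<sigma>^(4*k) = (\<sigma>^4)^k" by (simp only: power_mult)
    finally show ?thesis by simp
  qed
  show ?thesis
    unfolding pois_def \<beta>_def[symmetric] gd y e sq1 sq2 p4 pb pm
    using nz by (simp add: field_simps p)
qed

lemma sqdens_sums:
  assumes w: "0 < w" and s: "0 < \<sigma>"
  shows "(\<lambda>k. pois (c^2 / (2 * \<sigma>^2)) k * gamma_density (1/2 + real k) (1 / (2 * \<sigma>^2)) w)
          sums sqdens (normal_density c \<sigma>) w"
proof -
  define y where "y = c * sqrt w / \<sigma>^2"
  define A where "A = exp (- (w + c^2) / (2 * \<sigma>^2)) / (sqrt (2 * pi * \<sigma>^2) * sqrt w)"
  have "(\<lambda>k. A * (y ^ (2 * k) / fact (2 * k))) sums (A * cosh y)"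
    by (rule sums_mult[OF cosh_even_sums])
  moreover have "A * cosh y = sqdens (normal_density c \<sigma>) w"
  proof -
    have q1: "(sqrt w - c)\<^sup>2 = w + c^2 - 2 * c * sqrt w"
      using w by (simp add: power2_eq_square algebra_simps)
    have q2: "(- sqrt w - c)\<^sup>2 = w + c^2 + 2 * c * sqrt w"
      using w by (simp add: power2_eq_square algebra_simps)
    have e1: "exp (- (sqrt w - c)\<^sup>2 / (2 * \<sigma>\<^sup>2)) = exp (- (w + c^2) / (2 * \<sigma>^2)) * exp y"
      using w s unfolding y_def q1 by (simp add: exp_add[symmetric] field_simps)
    have e2: "exp (- (- sqrt w - c)\<^sup>2 / (2 * \<sigma>\<^sup>2)) = exp (- (w + c^2) / (2 * \<sigma>^2)) * exp (- y)"
      using w s unfolding y_def q2 by (simp add: exp_add[symmetric] field_simps)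
    show ?thesis
      using w s unfolding sqdens_def normal_density_def A_def cosh_field_def e1 e2
      by (simp add: field_simps)
  qed
  ultimately show ?thesis
    unfolding A_def y_def term_identity[OF w s] by simp
qed

lemma sqdens_mix:
  assumes s: "0 < \<sigma>"
  shows "ennreal (sqdens (normal_density c \<sigma>) w) =
         (\<Sum>k. ennreal (pois (c^2 / (2 * \<sigma>^2)) k * gamma_density (1/2 + real k) (1 / (2 * \<sigma>^2)) w))"
proof (cases "0 < w")
  case True
  show ?thesis
    by (rule suminf_ennreal_eq[symmetric])
       (auto intro!: mult_nonneg_nonneg pois_nonneg gamma_density_nonneg sqdens_sums[OF True s])
next
  case False
  then show ?thesis by (simp add: sqdens_def gamma_density_def)
qed



definition mixdens :: "real \<Rightarrow> real \<Rightarrow> real \<Rightarrow> real \<Rightarrow> ennreal" where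
  "mixdens a \<beta> m u = (\<Sum>k. ennreal (pois m k * gamma_density (a + real k) \<beta> u))"

lemma mixdens_meas[measurable]: "mixdens a \<beta> m \<in> borel_measurable borel"
  unfolding mixdens_def[abs_def] by measurable

lemma pois_sum: assumes "0 \<le> m" shows "(\<Sum>k. ennreal (pois m k)) = 1"
proof -
  have "(\<lambda>k. exp (- m) * (m ^ k /\<^sub>R fact k)) sums (exp (- m) * exp m)"
    by (rule sums_mult[OF exp_converges])
  then have "(\<lambda>k. pois m k) sums 1"
    by (simp add: pois_def exp_minus divide_inverse ac_simps)
  then show ?thesis using assms
    by (subst suminf_ennreal_eq[where x=1]) (auto intro: pois_nonneg)
qed

lemma mix_emeasure:
  assumes a: "0 < a" and b: "0 < \<beta>" and m: "0 \<le> m" and A[measurable]: "A \<in> sets borel"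
  shows "emeasure (density lborel (mixdens a \<beta> m)) A =
         (\<Sum>k. ennreal (pois m k) * emeasure (gamma_measure (a + real k) \<beta>) A)"
proof -
  have "emeasure (density lborel (mixdens a \<beta> m)) A = (\<integral>\<^sup>+u. mixdens a \<beta> m u * indicator A u \<partial>lborel)"
    by (simp add: emeasure_density)
  also have "\<dots> = (\<integral>\<^sup>+u. (\<Sum>k. ennreal (pois m k * gamma_density (a + real k) \<beta> u) * indicator A u) \<partial>lborel)"
    unfolding mixdens_def by simp
  also have "\<dots> = (\<Sum>k. \<integral>\<^sup>+u. ennreal (pois m k * gamma_density (a + real k) \<beta> u) * indicator A u \<partial>lborel)"
    by (rule nn_integral_suminf) simp
  also have "\<dots> = (\<Sum>k. ennreal (pois m k) * emeasure (gamma_measure (a + real k) \<beta>) A)"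
  proof (rule suminf_cong)
    fix k
    have "(\<integral>\<^sup>+u. ennreal (pois m k * gamma_density (a + real k) \<beta> u) * indicator A u \<partial>lborel)
        = (\<integral>\<^sup>+u. ennreal (pois m k) * (ennreal (gamma_density (a + real k) \<beta> u) * indicator A u) \<partial>lborel)"
      using a m by (intro nn_integral_cong) (simp add: ennreal_mult pois_nonneg gamma_density_nonneg mult.assoc)
    also have "\<dots> = ennreal (pois m k) * (\<integral>\<^sup>+u. ennreal (gamma_density (a + real k) \<beta> u) * indicator A u \<partial>lborel)"
      by (rule nn_integral_cmult) simp
    also have "\<dots> = ennreal (pois m k) * emeasure (gamma_measure (a + real k) \<beta>) A"
      by (simp add: gamma_measure_def emeasure_density)
    finally show "(\<integral>\<^sup>+u. ennreal (pois m k * gamma_density (a + real k) \<beta> u) * indicator A u \<partial>lborel)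
        = ennreal (pois m k) * emeasure (gamma_measure (a + real k) \<beta>) A" .
  qed
  finally show ?thesis .
qed

lemma prob_space_mix:
  assumes a: "0 < a" and b: "0 < \<beta>" and m: "0 \<le> m"
  shows "prob_space (density lborel (mixdens a \<beta> m))"
proof (rule prob_spaceI)
  have "emeasure (density lborel (mixdens a \<beta> m)) UNIV = (\<Sum>k. ennreal (pois m k) * emeasure (gamma_measure (a + real k) \<beta>) UNIV)"
    by (rule mix_emeasure[OF a b m]) simp
  also have "\<dots> = (\<Sum>k. ennreal (pois m k))"
  proof (rule suminf_cong)
    fix k
    have "a + real k > 0" using a by simp
    then have "prob_space (gamma_measure (a + real k) \<beta>)" by (rule prob_space_gamma[OF _ b])
    then have "emeasure (gamma_measure (a + real k) \<beta>) UNIV = 1"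
      using prob_space.emeasure_space_1 by fastforce
    then show "ennreal (pois m k) * emeasure (gamma_measure (a + real k) \<beta>) UNIV = ennreal (pois m k)" by simp
  qed
  also have "\<dots> = 1" by (rule pois_sum[OF m])
  finally show "emeasure (density lborel (mixdens a \<beta> m)) (space (density lborel (mixdens a \<beta> m))) = 1"
    by simp
qed

lemma mix_conv:
  assumes a: "0 < a" and c: "0 < c" and b: "0 < \<beta>" and m: "0 \<le> m"
  shows "density lborel (mixdens a \<beta> m) \<star> gamma_measure c \<beta> = density lborel (mixdens (a + c) \<beta> m)"
proof -
  have "density lborel (mixdens a \<beta> m) \<star> gamma_measure c \<beta> =
        density lborel (\<lambda>x. \<integral>\<^sup>+y. mixdens a \<beta> m (x - y) * ennreal (gamma_density c \<beta> y) \<partial>lborel)"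
    unfolding gamma_measure_def
  proof (rule convolution_density)
    show "finite_measure (density lborel (mixdens a \<beta> m))"
      using prob_space_mix[OF a b m] by (rule prob_space.finite_measure)
    show "finite_measure (density lborel (\<lambda>u. ennreal (gamma_density c \<beta> u)))"
      using prob_space_gamma[OF c b] unfolding gamma_measure_def by (rule prob_space.finite_measure)
  qed simp_all
  also have "\<dots> = density lborel (mixdens (a + c) \<beta> m)"
  proof (rule density_cong[OF _ _ AE_I2])
    fix x :: real
    have "(\<integral>\<^sup>+y. mixdens a \<beta> m (x - y) * ennreal (gamma_density c \<beta> y) \<partial>lborel)
        = (\<integral>\<^sup>+y. (\<Sum>k. ennreal (pois m k * gamma_density (a + real k) \<beta> (x - y)) * ennreal (gamma_density c \<beta> y)) \<partial>lborel)"
      unfolding mixdens_def by simp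
    also have "\<dots> = (\<Sum>k. \<integral>\<^sup>+y. ennreal (pois m k * gamma_density (a + real k) \<beta> (x - y)) * ennreal (gamma_density c \<beta> y) \<partial>lborel)"
      by (rule nn_integral_suminf) simp
    also have "\<dots> = (\<Sum>k. ennreal (pois m k * gamma_density ((a + c) + real k) \<beta> x))"
    proof (rule suminf_cong)
      fix k
      have ak: "0 < a + real k" using a by simp
      have "(\<integral>\<^sup>+y. ennreal (pois m k * gamma_density (a + real k) \<beta> (x - y)) * ennreal (gamma_density c \<beta> y) \<partial>lborel)
          = (\<integral>\<^sup>+y. ennreal (pois m k) * (ennreal (gamma_density (a + real k) \<beta> (x - y)) * ennreal (gamma_density c \<beta> y)) \<partial>lborel)"
        using ak m by (intro nn_integral_cong) (simp add: ennreal_mult pois_nonneg gamma_density_nonneg mult.assoc)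
      also have "\<dots> = ennreal (pois m k) * (\<integral>\<^sup>+y. ennreal (gamma_density (a + real k) \<beta> (x - y)) * ennreal (gamma_density c \<beta> y) \<partial>lborel)"
        by (rule nn_integral_cmult) simp
      also have "\<dots> = ennreal (pois m k) * ennreal (gamma_density (a + real k + c) \<beta> x)"
        by (simp add: gamma_conv_pointwise[OF ak c b])
      also have "\<dots> = ennreal (pois m k * gamma_density (a + real k + c) \<beta> x)"
        using ak c by (intro ennreal_mult[symmetric] pois_nonneg[OF m] gamma_density_nonneg) simp
      also have "\<dots> = ennreal (pois m k * gamma_density ((a + c) + real k) \<beta> x)"
        by (simp add: algebra_simps)
      finally show "(\<integral>\<^sup>+y. ennreal (pois m k * gamma_density (a + real k) \<beta> (x - y)) * ennreal (gamma_density c \<beta> y) \<partial>lborel)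
          = ennreal (pois m k * gamma_density ((a + c) + real k) \<beta> x)" .
    qed
    finally show "(\<integral>\<^sup>+y. mixdens a \<beta> m (x - y) * ennreal (gamma_density c \<beta> y) \<partial>lborel) = mixdens (a + c) \<beta> m x"
      unfolding mixdens_def .
  qed simp_all
  finally show ?thesis .
qed



lemma pmf_law: "pmf (if 0 < m then poisson_pmf m else return_pmf 0) k = pois (max 0 m) k"
proof (cases "0 < m")
  case True
  then show ?thesis by (simp add: pois_def)
next
  case False
  then show ?thesis by (cases k) (auto simp: pois_def indicator_def max_def)
qed

lemma gamma_in_space:
  "0 < a \<Longrightarrow> 0 < b \<Longrightarrow> gamma_measure a b \<in> space (subprob_algebra borel)"
  by (simp add: space_subprob_algebra prob_space_imp_subprob_space prob_space_gamma)

lemma law_bind: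
  assumes a: "0 < \<alpha>" and b: "0 < \<beta>"
  shows "poisson_law m \<bind> (\<lambda>k. gamma_measure (\<alpha> + real k) \<beta>) = density lborel (mixdens \<alpha> \<beta> (max 0 m))"
proof -
  define p where "p = (if 0 < m then poisson_pmf m else return_pmf 0)"
  have law: "poisson_law m = measure_pmf p" unfolding poisson_law_def p_def by simp
  have ak: "\<And>k. 0 < \<alpha> + real k" using a by (simp add: add_pos_nonneg)
  have G: "(\<lambda>k. gamma_measure (\<alpha> + real k) \<beta>) \<in> measurable (measure_pmf p) (subprob_algebra borel)"
    using gamma_in_space[OF ak b] by simp
  show ?thesis unfolding law
  proof (rule measure_eqI)
    show "sets (measure_pmf p \<bind> (\<lambda>k. gamma_measure (\<alpha> + real k) \<beta>)) = sets (density lborel (mixdens \<alpha> \<beta> (max 0 m)))"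
      by (subst sets_bind) auto
    fix A assume "A \<in> sets (measure_pmf p \<bind> (\<lambda>k. gamma_measure (\<alpha> + real k) \<beta>))"
    then have A[measurable]: "A \<in> sets borel" by (subst (asm) sets_bind) auto
    have "emeasure (measure_pmf p \<bind> (\<lambda>k. gamma_measure (\<alpha> + real k) \<beta>)) A
        = (\<integral>\<^sup>+k. emeasure (gamma_measure (\<alpha> + real k) \<beta>) A \<partial>measure_pmf p)"
      by (rule emeasure_bind[OF _ G]) auto
    also have "\<dots> = (\<integral>\<^sup>+k. ennreal (pmf p k) * emeasure (gamma_measure (\<alpha> + real k) \<beta>) A \<partial>count_space UNIV)"
      by (rule nn_integral_measure_pmf)
    also have "\<dots> = (\<Sum>k. ennreal (pois (max 0 m) k) * emeasure (gamma_measure (\<alpha> + real k) \<beta>) A)"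
      by (simp add: nn_integral_count_space_nat p_def pmf_law)
    also have "\<dots> = emeasure (density lborel (mixdens \<alpha> \<beta> (max 0 m))) A"
      by (rule mix_emeasure[symmetric, OF a b _ A]) simp
    finally show "emeasure (measure_pmf p \<bind> (\<lambda>k. gamma_measure (\<alpha> + real k) \<beta>)) A = emeasure (density lborel (mixdens \<alpha> \<beta> (max 0 m))) A" .
  qed
qed

lemma mix_kernel_meas:
  fixes h :: "real \<Rightarrow> real"
  assumes a: "0 < \<alpha>" and b: "0 < \<beta>" and h[measurable]: "h \<in> borel_measurable borel"
  shows "(\<lambda>x. density lborel (mixdens \<alpha> \<beta> (max 0 (h x)))) \<in> measurable borel (subprob_algebra borel)"
proof (rule measurable_subprob_algebra)
  fix x :: real
  show "subprob_space (density lborel (mixdens \<alpha> \<beta> (max 0 (h x))))"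
    by (rule prob_space_imp_subprob_space, rule prob_space_mix[OF a b]) simp
  show "sets (density lborel (mixdens \<alpha> \<beta> (max 0 (h x)))) = sets borel" by simp
next
  fix A :: "real set" assume A[measurable]: "A \<in> sets borel"
  have "(\<lambda>x. emeasure (density lborel (mixdens \<alpha> \<beta> (max 0 (h x)))) A)
      = (\<lambda>x. \<Sum>k. ennreal (pois (max 0 (h x)) k) * emeasure (gamma_measure (\<alpha> + real k) \<beta>) A)"
    by (rule ext, rule mix_emeasure[OF a b _ A]) simp
  also have "\<dots> \<in> borel_measurable borel"
    unfolding pois_def by measurable
  finally show "(\<lambda>x. emeasure (density lborel (mixdens \<alpha> \<beta> (max 0 (h x)))) A) \<in> borel_measurable borel" .
qed

lemma bind_distr_pair:
  assumes N: "subprob_space N" and ne: "space M \<noteq> {}"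
    and f[measurable]: "case_prod f \<in> measurable (M \<Otimes>\<^sub>M N) L"
  shows "M \<bind> (\<lambda>y. distr N L (f y)) = distr (M \<Otimes>\<^sub>M N) L (case_prod f)"
proof -
  interpret N: subprob_space N by fact
  interpret Ns: sigma_finite_measure N by (rule subprob_space_imp_sigma_finite[OF N])
  have Nsp: "N \<in> space (subprob_algebra N)" by (simp add: space_subprob_algebra N)
  have K: "(\<lambda>y. distr N L (f y)) \<in> measurable M (subprob_algebra L)"
    by (rule measurable_distr2[OF f measurable_const[OF Nsp]])
  show ?thesis
  proof (rule measure_eqI)
    show "sets (M \<bind> (\<lambda>y. distr N L (f y))) = sets (distr (M \<Otimes>\<^sub>M N) L (case_prod f))"
      using ne by (subst sets_bind) auto
    fix A assume "A \<in> sets (M \<bind> (\<lambda>y. distr N L (f y)))"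
    then have A[measurable]: "A \<in> sets L" using ne by (subst (asm) sets_bind) auto
    have "emeasure (M \<bind> (\<lambda>y. distr N L (f y))) A = (\<integral>\<^sup>+y. emeasure (distr N L (f y)) A \<partial>M)"
      by (rule emeasure_bind[OF ne K A])
    also have "\<dots> = (\<integral>\<^sup>+y. emeasure N (Pair y -` (case_prod f -` A \<inter> space (M \<Otimes>\<^sub>M N))) \<partial>M)"
    proof (rule nn_integral_cong)
      fix y assume y: "y \<in> space M"
      have fy: "f y \<in> measurable N L" using measurable_Pair2[OF f y] by simp
      have "Pair y -` (case_prod f -` A \<inter> space (M \<Otimes>\<^sub>M N)) = f y -` A \<inter> space N"
        using y by (auto simp: space_pair_measure)
      then show "emeasure (distr N L (f y)) A = emeasure N (Pair y -` (case_prod f -` A \<inter> space (M \<Otimes>\<^sub>M N)))"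
        using fy by (simp add: emeasure_distr)
    qed
    also have "\<dots> = emeasure (M \<Otimes>\<^sub>M N) (case_prod f -` A \<inter> space (M \<Otimes>\<^sub>M N))"
      by (rule sigma_finite_measure.emeasure_pair_measure_alt[OF subprob_space_imp_sigma_finite[OF N], symmetric]) (rule measurable_sets[OF f A])
    also have "\<dots> = emeasure (distr (M \<Otimes>\<^sub>M N) L (case_prod f)) A"
      by (rule emeasure_distr[symmetric, OF f A])
    finally show "emeasure (M \<bind> (\<lambda>y. distr N L (f y))) A = emeasure (distr (M \<Otimes>\<^sub>M N) L (case_prod f)) A" .
  qed
qed

lemma distr_pair_sum:
  assumes P: "prob_space P" and Q: "prob_space Q"
    and f[measurable]: "f \<in> borel_measurable P" and g[measurable]: "g \<in> borel_measurable Q"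
  shows "distr (P \<Otimes>\<^sub>M Q) borel (\<lambda>(y, z). f y + (g z :: real)) = (distr P borel f \<star> distr Q borel g)"
proof -
  have sf: "sigma_finite_measure (distr Q borel g)"
    by (rule prob_space_imp_sigma_finite, rule prob_space.prob_space_distr[OF Q g])
  have "(distr P borel f \<star> distr Q borel g) = distr (distr (P \<Otimes>\<^sub>M Q) (borel \<Otimes>\<^sub>M borel) (\<lambda>(x, y). (f x, g y))) borel (\<lambda>(x, y). x + y)"
    unfolding convolution_def by (subst pair_measure_distr[OF f g sf]) simp
  also have "\<dots> = distr (P \<Otimes>\<^sub>M Q) borel (\<lambda>(y, z). f y + g z)"
    by (subst distr_distr) (auto simp: comp_def case_prod_unfold)
  finally show ?thesis ..
qed

lemma H_eq:
  assumes a: "0 < \<alpha>" and l: "0 < lam" and t: "0 < \<tau>" "\<tau> < 1"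
  shows "(if k = 0 then return borel 0 else gamma_measure (real k) (lam * \<tau> / (1 - \<tau>))) \<bind>
           (\<lambda>y. gamma_measure \<alpha> lam \<bind> (\<lambda>g. return borel ((1 - \<tau>) * g + \<tau> * y)))
         = gamma_measure (\<alpha> + real k) (lam / (1 - \<tau>))"
proof -
  have t1: "0 < 1 - \<tau>" using t by simp
  have inner: "\<And>y. gamma_measure \<alpha> lam \<bind> (\<lambda>g. return borel ((1 - \<tau>) * g + \<tau> * y))
      = distr (gamma_measure \<alpha> lam) borel (\<lambda>g. (1 - \<tau>) * g + \<tau> * y)"
    by (rule bind_return_distr') simp_all
  have Gsp: "gamma_measure \<alpha> lam \<in> space (subprob_algebra borel)" by (rule gamma_in_space[OF a l])
  have K: "(\<lambda>y. distr (gamma_measure \<alpha> lam) borel (\<lambda>g. (1 - \<tau>) * g + \<tau> * y)) \<in> measurable borel (subprob_algebra borel)"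
    by (rule measurable_distr2[where M=borel, OF _ measurable_const[OF Gsp]]) simp
  have sc: "distr (gamma_measure \<alpha> lam) borel (\<lambda>g. (1 - \<tau>) * g) = gamma_measure \<alpha> (lam / (1 - \<tau>))"
    by (rule gamma_scale[OF l t1])
  show ?thesis
  proof (cases "k = 0")
    case True
    then show ?thesis unfolding inner using bind_return[OF K, of 0] sc by simp
  next
    case False
    have kp: "0 < real k" using False by simp
    have rp: "0 < lam * \<tau> / (1 - \<tau>)" using l t t1 by simp
    have sc2: "distr (gamma_measure (real k) (lam * \<tau> / (1 - \<tau>))) borel (\<lambda>y. \<tau> * y) = gamma_measure (real k) (lam / (1 - \<tau>))"
      using gamma_scale[OF rp t(1), of "real k"] t by simp
    have "gamma_measure (real k) (lam * \<tau> / (1 - \<tau>)) \<bind> (\<lambda>y. distr (gamma_measure \<alpha> lam) borel (\<lambda>g. (1 - \<tau>) * g + \<tau> * y))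
        = distr (gamma_measure (real k) (lam * \<tau> / (1 - \<tau>)) \<Otimes>\<^sub>M gamma_measure \<alpha> lam) borel (\<lambda>(y, g). (1 - \<tau>) * g + \<tau> * y)"
      by (rule bind_distr_pair[where f="\<lambda>y g. (1 - \<tau>) * g + \<tau> * y", OF prob_space_imp_subprob_space[OF prob_space_gamma[OF a l]]])
         auto
    also have "\<dots> = distr (gamma_measure (real k) (lam * \<tau> / (1 - \<tau>)) \<Otimes>\<^sub>M gamma_measure \<alpha> lam) borel (\<lambda>(y, g). \<tau> * y + (1 - \<tau>) * g)"
      by (intro distr_cong) (auto simp: algebra_simps)
    also have "\<dots> = (distr (gamma_measure (real k) (lam * \<tau> / (1 - \<tau>))) borel (\<lambda>y. \<tau> * y) \<star> distr (gamma_measure \<alpha> lam) borel (\<lambda>g. (1 - \<tau>) * g))"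
      by (rule distr_pair_sum[OF prob_space_gamma[OF kp rp] prob_space_gamma[OF a l]]) simp_all
    also have "\<dots> = (gamma_measure (real k) (lam / (1 - \<tau>)) \<star> gamma_measure \<alpha> (lam / (1 - \<tau>)))"
      unfolding sc sc2 ..
    also have "\<dots> = gamma_measure (real k + \<alpha>) (lam / (1 - \<tau>))"
      by (rule gamma_conv[OF kp a]) (use l t1 in simp)
    finally show ?thesis using False unfolding inner by (simp add: add.commute)
  qed
qed



lemma distr_borel_lborel: "distr M borel X = distr M lborel X"
  by (rule distr_cong) simp_all

lemma R_eq:
  assumes M: "prob_space M"
    and a: "\<alpha> > 1/2" and l: "lam > 0" and t: "0 < \<tau>" "\<tau> < 1" and x: "0 < x"
    and Zd: "distributed M lborel Z std_normal_density"
    and Gd: "distributed M lborel G (gamma_density (\<alpha> - 1/2) lam)"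
  shows "distr (distr M borel Z \<Otimes>\<^sub>M distr M borel G) borel
           (\<lambda>(z, g). (1 - \<tau>) * g + (sqrt \<tau> * sqrt x + sqrt ((1 - \<tau>) / (2 * lam)) * z)\<^sup>2)
         = density lborel (mixdens \<alpha> (lam / (1 - \<tau>)) (max 0 (lam * \<tau> * x / (1 - \<tau>))))"
proof -
  interpret P: prob_space M by fact
  have t1: "0 < 1 - \<tau>" using t by simp
  define s where "s = sqrt ((1 - \<tau>) / (2 * lam))"
  define c where "c = sqrt \<tau> * sqrt x"
  define \<beta> where "\<beta> = lam / (1 - \<tau>)"
  define m where "m = lam * \<tau> * x / (1 - \<tau>)"
  have sp: "0 < s" unfolding s_def using t1 l by simp
  have bp: "0 < \<beta>" unfolding \<beta>_def using t1 l by simp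
  have mp: "0 \<le> m" unfolding m_def using t1 l t x by simp
  have s2: "s^2 = (1 - \<tau>) / (2 * lam)" unfolding s_def using t1 l by simp
  have c2: "c^2 = \<tau> * x" unfolding c_def using t x by (simp add: power_mult_distrib)
  have b_eq: "1 / (2 * s^2) = \<beta>" unfolding s2 \<beta>_def using l t1 by (simp add: field_simps)
  have m_eq: "c^2 / (2 * s^2) = m" unfolding s2 c2 m_def using l t1 by (simp add: field_simps)
  have Zm[measurable]: "Z \<in> borel_measurable M" using distributed_measurable[OF Zd] by simp
  have Gm[measurable]: "G \<in> borel_measurable M" using distributed_measurable[OF Gd] by simp
  have a1: "0 < \<alpha> - 1/2" using a by simp
  have PZ: "prob_space (distr M borel Z)" by (rule P.prob_space_distr) simp
  have PG: "prob_space (distr M borel G)" by (rule P.prob_space_distr) simp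
  have Geq: "distr M borel G = gamma_measure (\<alpha> - 1/2) lam"
    unfolding distr_borel_lborel distributed_distr_eq_density[OF Gd] gamma_measure_def ..
  have Gsc: "distr (distr M borel G) borel (\<lambda>g. (1 - \<tau>) * g) = gamma_measure (\<alpha> - 1/2) \<beta>"
    unfolding Geq \<beta>_def by (rule gamma_scale[OF l t1])
  have aff: "distributed M lborel (\<lambda>\<omega>. c + s * Z \<omega>) (normal_density (c + s * 0) (\<bar>s\<bar> * 1))"
    by (rule P.normal_density_affine[OF Zd]) (use sp in simp_all)
  have aff': "distr M borel (\<lambda>\<omega>. c + s * Z \<omega>) = density lborel (\<lambda>v. ennreal (normal_density c s v))"
    using distributed_distr_eq_density[OF aff] sp unfolding distr_borel_lborel by simp
  have Zsq: "distr (distr M borel Z) borel (\<lambda>z. (c + s * z)\<^sup>2) = density lborel (mixdens (1/2) \<beta> m)"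
  proof -
    have "distr (distr M borel Z) borel (\<lambda>z. (c + s * z)\<^sup>2) = distr M borel (\<lambda>\<omega>. (c + s * Z \<omega>)\<^sup>2)"
      by (subst distr_distr) (auto simp: comp_def)
    also have "\<dots> = distr (distr M borel (\<lambda>\<omega>. c + s * Z \<omega>)) borel (\<lambda>v. v\<^sup>2)"
      by (subst distr_distr) (auto simp: comp_def)
    also have "\<dots> = density lborel (\<lambda>w. ennreal (sqdens (normal_density c s) w))"
      unfolding aff' by (rule distr_square_density) simp_all
    also have "\<dots> = density lborel (mixdens (1/2) \<beta> m)"
      unfolding mixdens_def sqdens_mix[OF sp] b_eq m_eq ..
    finally show ?thesis .
  qed
  have "distr (distr M borel Z \<Otimes>\<^sub>M distr M borel G) borel
           (\<lambda>(z, g). (1 - \<tau>) * g + (sqrt \<tau> * sqrt x + sqrt ((1 - \<tau>) / (2 * lam)) * z)\<^sup>2)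
      = distr (distr M borel Z \<Otimes>\<^sub>M distr M borel G) borel (\<lambda>(z, g). (c + s * z)\<^sup>2 + (1 - \<tau>) * g)"
    unfolding c_def s_def by (intro distr_cong) (auto simp: add.commute)
  also have "\<dots> = (distr (distr M borel Z) borel (\<lambda>z. (c + s * z)\<^sup>2) \<star> distr (distr M borel G) borel (\<lambda>g. (1 - \<tau>) * g))"
    by (rule distr_pair_sum[OF PZ PG]) simp_all
  also have "\<dots> = (density lborel (mixdens (1/2) \<beta> m) \<star> gamma_measure (\<alpha> - 1/2) \<beta>)"
    unfolding Zsq Gsc ..
  also have "\<dots> = density lborel (mixdens (1/2 + (\<alpha> - 1/2)) \<beta> m)"
    by (rule mix_conv[OF _ a1 bp mp]) simp
  also have "\<dots> = density lborel (mixdens \<alpha> (lam / (1 - \<tau>)) (max 0 (lam * \<tau> * x / (1 - \<tau>))))"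
    using mp unfolding \<beta>_def m_def by simp
  finally show ?thesis .
qed

lemma joint:
  assumes M: "prob_space M"
    and ind: "prob_space.indep_vars M (\<lambda>_. borel) (\<lambda>i. [X, Z, G] ! i) {0, 1, 2::nat}"
  shows "distr M (borel \<Otimes>\<^sub>M (borel \<Otimes>\<^sub>M borel)) (\<lambda>\<omega>. (X \<omega>, (Z \<omega>, G \<omega>)))
       = distr M borel X \<Otimes>\<^sub>M (distr M borel Z \<Otimes>\<^sub>M distr M borel (G :: _ \<Rightarrow> real))"
proof -
  interpret P: prob_space M by fact
  let ?Y = "\<lambda>i. [X, Z, G] ! i"
  let ?A = "PiM {0::nat} (\<lambda>_. borel :: real measure)"
  let ?B = "PiM {1,2::nat} (\<lambda>_. borel :: real measure)"
  let ?R0 = "\<lambda>\<omega>. restrict (\<lambda>i. ?Y i \<omega>) {0}"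
  let ?R12 = "\<lambda>\<omega>. restrict (\<lambda>i. ?Y i \<omega>) {1,2}"
  have rv: "\<And>i. i \<in> {0,1,2} \<Longrightarrow> ?Y i \<in> borel_measurable M"
    using ind unfolding P.indep_vars_def by blast
  have Xm[measurable]: "X \<in> borel_measurable M" using rv[of 0] by simp
  have Zm[measurable]: "Z \<in> borel_measurable M" using rv[of 1] by simp
  have Gm[measurable]: "G \<in> borel_measurable M" using rv[of 2] by simp
  have i1: "P.indep_var ?A ?R0 ?B ?R12"
    by (rule P.indep_var_restrict[OF ind]) auto
  have d1: "distr M ?A ?R0 \<Otimes>\<^sub>M distr M ?B ?R12 = distr M (?A \<Otimes>\<^sub>M ?B) (\<lambda>\<omega>. (?R0 \<omega>, ?R12 \<omega>))"
    using i1 unfolding P.indep_var_distribution_eq by blast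
  have R0m[measurable]: "?R0 \<in> measurable M ?A" using i1 unfolding P.indep_var_distribution_eq by blast
  have R12m[measurable]: "?R12 \<in> measurable M ?B" using i1 unfolding P.indep_var_distribution_eq by blast
  have m0: "(\<lambda>f. f 0) \<in> measurable ?A borel"
    using measurable_component_singleton[of 0 "{0::nat}" "\<lambda>_. borel :: real measure"] by simp
  have m12: "(\<lambda>f. (f 1, f 2)) \<in> measurable ?B (borel \<Otimes>\<^sub>M borel)"
    using measurable_component_singleton[of 1 "{1,2::nat}" "\<lambda>_. borel :: real measure"]
          measurable_component_singleton[of 2 "{1,2::nat}" "\<lambda>_. borel :: real measure"]
    by (intro measurable_Pair) simp_all
  have m0': "(\<lambda>f. f 0) \<in> measurable (distr M ?A ?R0) borel"
    using m0 by simp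
  have m12'': "(\<lambda>f. (f 1, f 2)) \<in> measurable (distr M ?B ?R12) (borel \<Otimes>\<^sub>M borel)"
    using m12 by simp
  have sf: "sigma_finite_measure (distr (distr M ?B ?R12) (borel \<Otimes>\<^sub>M borel) (\<lambda>f. (f 1, f 2)))"
  proof -
    have m12': "(\<lambda>f. (f 1, f 2)) \<in> measurable (distr M ?B ?R12) (borel \<Otimes>\<^sub>M borel)"
      using m12 by simp
    show ?thesis
      by (rule prob_space_imp_sigma_finite, rule prob_space.prob_space_distr[OF P.prob_space_distr[OF R12m] m12'])
  qed
  have "distr M (borel \<Otimes>\<^sub>M (borel \<Otimes>\<^sub>M borel)) (\<lambda>\<omega>. (X \<omega>, (Z \<omega>, G \<omega>)))
      = distr (distr M (?A \<Otimes>\<^sub>M ?B) (\<lambda>\<omega>. (?R0 \<omega>, ?R12 \<omega>))) (borel \<Otimes>\<^sub>M (borel \<Otimes>\<^sub>M borel)) (\<lambda>(f, g). (f 0, (g 1, g 2)))"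
    using m0 m12 measurable_Pair[OF R0m R12m] by (subst distr_distr) (auto simp: comp_def)
  also have "\<dots> = distr (distr M ?A ?R0 \<Otimes>\<^sub>M distr M ?B ?R12) (borel \<Otimes>\<^sub>M (borel \<Otimes>\<^sub>M borel)) (\<lambda>(f, g). (f 0, (g 1, g 2)))"
    unfolding d1 ..
  also have "\<dots> = distr (distr M ?A ?R0) borel (\<lambda>f. f 0) \<Otimes>\<^sub>M distr (distr M ?B ?R12) (borel \<Otimes>\<^sub>M borel) (\<lambda>f. (f 1, f 2))"
    by (rule pair_measure_distr[OF m0' m12'' sf, symmetric])
  also have "distr (distr M ?A ?R0) borel (\<lambda>f. f 0) = distr M borel X"
    by (subst distr_distr[OF m0 R0m]) (simp add: comp_def)
  also have "distr (distr M ?B ?R12) (borel \<Otimes>\<^sub>M borel) (\<lambda>f. (f 1, f 2)) = distr M (borel \<Otimes>\<^sub>M borel) (\<lambda>\<omega>. (Z \<omega>, G \<omega>))"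
    by (subst distr_distr[OF m12 R12m]) (simp add: comp_def)
  also have i2: "P.indep_var (PiM {1} (\<lambda>_. borel)) (\<lambda>\<omega>. restrict (\<lambda>i. ?Y i \<omega>) {1})
                        (PiM {2} (\<lambda>_. borel)) (\<lambda>\<omega>. restrict (\<lambda>i. ?Y i \<omega>) {2})"
    by (rule P.indep_var_restrict[OF ind]) auto
  then have "P.indep_var borel ((\<lambda>f. f 1) \<circ> (\<lambda>\<omega>. restrict (\<lambda>i. ?Y i \<omega>) {1}))
                    borel ((\<lambda>f. f 2) \<circ> (\<lambda>\<omega>. restrict (\<lambda>i. ?Y i \<omega>) {2}))"
    by (rule P.indep_var_compose)
       (use measurable_component_singleton[of 1 "{1::nat}" "\<lambda>_. borel :: real measure"]
            measurable_component_singleton[of 2 "{2::nat}" "\<lambda>_. borel :: real measure"] in simp_all)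
  then have i2': "P.indep_var borel Z borel G"
    by (simp add: comp_def)
  then have "distr M (borel \<Otimes>\<^sub>M borel) (\<lambda>\<omega>. (Z \<omega>, G \<omega>)) = distr M borel Z \<Otimes>\<^sub>M distr M borel G"
    unfolding P.indep_var_distribution_eq by simp
  finally show ?thesis .
qed



theorem corollary2p5:
  fixes M :: "'a measure" and X Z G :: "'a \<Rightarrow> real" and \<alpha> lam \<tau> :: real
  assumes "prob_space M"
    and "\<alpha> > 1/2" and "lam > 0" and "0 < \<tau>" and "\<tau> < 1"
    and "X \<in> borel_measurable M" and "AE \<omega> in M. X \<omega> > 0"
    and "distributed M lborel Z std_normal_density"
    and "distributed M lborel G (gamma_density (\<alpha> - 1/2) lam)"
    and "prob_space.indep_vars M (\<lambda>_. borel) (\<lambda>i. [X, Z, G] ! i) {0, 1, 2}"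
  shows "smart_path_law \<alpha> lam \<tau> (distr M borel X) =
         distr M borel (\<lambda>\<omega>. (1 - \<tau>) * G \<omega>
            + (sqrt \<tau> * sqrt (X \<omega>) + sqrt ((1 - \<tau>) / (2 * lam)) * Z \<omega>)\<^sup>2)"
proof -
  interpret P: prob_space M by fact
  have a: "\<alpha> > 1/2" and l: "lam > 0" and t: "0 < \<tau>" "\<tau> < 1" using assms by auto
  have a0: "0 < \<alpha>" using a by simp
  have t1: "0 < 1 - \<tau>" using t by simp
  have bp: "0 < lam / (1 - \<tau>)" using l t1 by simp
  have Xm[measurable]: "X \<in> borel_measurable M" by fact
  have Zm[measurable]: "Z \<in> borel_measurable M" using distributed_measurable[OF assms(8)] by simp
  have Gm[measurable]: "G \<in> borel_measurable M" using distributed_measurable[OF assms(9)] by simp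
  define \<mu> where "\<mu> = distr M borel X"
  define L where "L = (\<lambda>x::real. density lborel (mixdens \<alpha> (lam / (1 - \<tau>)) (max 0 (lam * \<tau> * x / (1 - \<tau>)))))"
  define NG where "NG = distr M borel Z \<Otimes>\<^sub>M distr M borel G"
  define \<Phi> where "\<Phi> = (\<lambda>x::real. \<lambda>(z::real, g::real). (1 - \<tau>) * g + (sqrt \<tau> * sqrt x + sqrt ((1 - \<tau>) / (2 * lam)) * z)\<^sup>2)"
  have \<mu>P: "prob_space \<mu>" unfolding \<mu>_def by (rule P.prob_space_distr) simp
  have NGP: "prob_space NG" unfolding NG_def
    by (intro prob_space_pair P.prob_space_distr) simp_all
  have sets_\<mu>[simp, measurable_cong]: "sets \<mu> = sets borel" unfolding \<mu>_def by simp
  have sets_NG[simp, measurable_cong]: "sets NG = sets (borel \<Otimes>\<^sub>M borel)" unfolding NG_def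
    by (intro sets_pair_measure_cong) simp_all
  have space_\<mu>: "space \<mu> = UNIV" unfolding \<mu>_def by simp
  have \<Phi>m[measurable]: "case_prod \<Phi> \<in> borel_measurable (borel \<Otimes>\<^sub>M (borel \<Otimes>\<^sub>M borel))"
    unfolding \<Phi>_def by measurable
  have \<Phi>m': "case_prod \<Phi> \<in> borel_measurable (\<mu> \<Otimes>\<^sub>M NG)"
  proof -
    have eq: "sets (\<mu> \<Otimes>\<^sub>M NG) = sets (borel \<Otimes>\<^sub>M (borel \<Otimes>\<^sub>M borel))"
      by (rule sets_pair_measure_cong) (rule sets_\<mu>, rule sets_NG)
    show ?thesis unfolding measurable_cong_sets[OF eq refl] by (rule \<Phi>m)
  qed

  have LHS: "smart_path_law \<alpha> lam \<tau> \<mu> = \<mu> \<bind> L"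
    unfolding smart_path_law_def
  proof (rule bind_cong[OF refl])
    fix x
    have "poisson_law (lam * \<tau> * x / (1 - \<tau>)) \<bind> (\<lambda>k.
        (if k = 0 then return borel 0 else gamma_measure (real k) (lam * \<tau> / (1 - \<tau>))) \<bind> (\<lambda>y.
        gamma_measure \<alpha> lam \<bind> (\<lambda>g. return borel ((1 - \<tau>) * g + \<tau> * y))))
      = poisson_law (lam * \<tau> * x / (1 - \<tau>)) \<bind> (\<lambda>k. gamma_measure (\<alpha> + real k) (lam / (1 - \<tau>)))"
      by (rule bind_cong[OF refl]) (rule H_eq[OF a0 l t])
    also have "\<dots> = L x" unfolding L_def by (rule law_bind[OF a0 bp])
    finally show "poisson_law (lam * \<tau> * x / (1 - \<tau>)) \<bind> (\<lambda>k.
        (if k = 0 then return borel 0 else gamma_measure (real k) (lam * \<tau> / (1 - \<tau>))) \<bind> (\<lambda>y.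
        gamma_measure \<alpha> lam \<bind> (\<lambda>g. return borel ((1 - \<tau>) * g + \<tau> * y)))) = L x" .
  qed

  have jt: "distr M (borel \<Otimes>\<^sub>M (borel \<Otimes>\<^sub>M borel)) (\<lambda>\<omega>. (X \<omega>, (Z \<omega>, G \<omega>))) = \<mu> \<Otimes>\<^sub>M NG"
    unfolding \<mu>_def NG_def by (rule joint[OF assms(1) assms(10)])
  have RHS1: "distr M borel (\<lambda>\<omega>. (1 - \<tau>) * G \<omega>
            + (sqrt \<tau> * sqrt (X \<omega>) + sqrt ((1 - \<tau>) / (2 * lam)) * Z \<omega>)\<^sup>2)
      = distr (\<mu> \<Otimes>\<^sub>M NG) borel (case_prod \<Phi>)"
  proof -
    have "distr M borel (\<lambda>\<omega>. (1 - \<tau>) * G \<omega>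
            + (sqrt \<tau> * sqrt (X \<omega>) + sqrt ((1 - \<tau>) / (2 * lam)) * Z \<omega>)\<^sup>2)
        = distr (distr M (borel \<Otimes>\<^sub>M (borel \<Otimes>\<^sub>M borel)) (\<lambda>\<omega>. (X \<omega>, (Z \<omega>, G \<omega>)))) borel (case_prod \<Phi>)"
      by (subst distr_distr[OF \<Phi>m]) (auto simp: comp_def \<Phi>_def)
    then show ?thesis unfolding jt .
  qed
  have RHS2: "distr (\<mu> \<Otimes>\<^sub>M NG) borel (case_prod \<Phi>) = \<mu> \<bind> (\<lambda>x. distr NG borel (\<Phi> x))"
    by (rule bind_distr_pair[symmetric, OF prob_space_imp_subprob_space[OF NGP] _ \<Phi>m'])
       (simp add: space_\<mu>)

  have Lm: "L \<in> measurable \<mu> (subprob_algebra borel)"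
  proof -
    have "L \<in> measurable borel (subprob_algebra borel)"
      unfolding L_def by (rule mix_kernel_meas[OF a0 bp]) simp
    then show ?thesis unfolding measurable_cong_sets[OF sets_\<mu> refl] .
  qed
  have NGsp: "NG \<in> space (subprob_algebra NG)"
    by (simp add: space_subprob_algebra prob_space_imp_subprob_space[OF NGP])
  have Rm: "(\<lambda>x. distr NG borel (\<Phi> x)) \<in> measurable \<mu> (subprob_algebra borel)"
    by (rule measurable_distr2[OF \<Phi>m' measurable_const[OF NGsp]])
  have AEpos: "AE x in \<mu>. 0 < x"
    unfolding \<mu>_def using assms(7) by (subst AE_distr_iff) simp_all
  have AEeq: "AE x in \<mu>. L x = distr NG borel (\<Phi> x)"
  proof (rule eventually_mono[OF AEpos])
    fix x :: real assume x: "0 < x"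
    show "L x = distr NG borel (\<Phi> x)"
      unfolding L_def NG_def \<Phi>_def
      by (rule R_eq[OF assms(1) a l t x assms(8) assms(9), symmetric])
  qed
  have "smart_path_law \<alpha> lam \<tau> (distr M borel X) = \<mu> \<bind> L" using LHS unfolding \<mu>_def .
  also have "\<dots> = \<mu> \<bind> (\<lambda>x. distr NG borel (\<Phi> x))"
    by (rule bind_cong_AE[OF refl Lm Rm AEeq])
  also have "\<dots> = distr M borel (\<lambda>\<omega>. (1 - \<tau>) * G \<omega>
            + (sqrt \<tau> * sqrt (X \<omega>) + sqrt ((1 - \<tau>) / (2 * lam)) * Z \<omega>)\<^sup>2)"
    unfolding RHS1 RHS2 ..
  finally show ?thesis .
qed

end
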